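(* For every positive integer $r$ there exist an integer $K_r\le 3^r$, elements $a_1,\dots,a_{K_r}\in\mathbf{D}_3$, and a map $\pi:\{1,\dots,K_r\}\to\{1,\dots,r\}$ such that for every $y\in\{0,1\}^r$, $$a_1^{y_{\pi(1)}}a_2^{y_{\pi(2)}}\cdots a_{K_r}^{y_{\pi(K_r)}}\neq 1\iff y_1=y_2=\dots=y_r=1.$$ Equivalently, the linear equation $C(x_1,\dots,x_{K_r})=a_1^{x_1}\cdots a_{K_r}^{x_{K_r}}$ over $\mathbf{D}_3$ satisfies $\mathbf 1[C(y_{\pi(1)},\dots,y_{\pi(K_r)})\ne1]=\mathbf{AND}_r(y_1,\dots,y_r)$.
   Context: $\mathbf{D}_3$ denotes the dihedral group of order 6; $1$ denotes its identity and $a^0=1$, $a^1=a$. A linear equation over a group $G$ on variables $x_1,\dots,x_K\in\{0,1\}$ is a map of the form $C(x)=a_1^{x_1}\cdots a_K^{x_K}$ with $a_i\in G$, the product taken in the given order. $\mathbf{AND}_r(y)=1$ iff all $y_i=1$, and $0$ otherwise. *)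

theory Defs
  imports "HOL-Algebra.Group"
begin

text \<open>The dihedral group D3 of order 6, realised concretely: the element (k, s)
  with k in {0,1,2} and s a boolean stands for rho^k sigma^s (rho a rotation of order 3,
  sigma a reflection, sigma rho sigma = rho^-1).  Hence
  (k1,s1)(k2,s2) = (k1 + (-1)^s1 k2 mod 3, s1 xor s2).\<close>

definition D3 :: "(int \<times> bool) monoid" where
  "D3 = \<lparr> carrier = {0,1,2} \<times> UNIV,
          mult = (\<lambda>(k1, s1) (k2, s2). ((k1 + (if s1 then - k2 else k2)) mod 3, s1 \<noteq> s2)),
          one = (0, False) \<rparr>"

definition list_prod :: "('a, 'b) monoid_scheme \<Rightarrow> 'a list \<Rightarrow> 'a" where
  "list_prod G xs = foldr (\<lambda>x acc. x \<otimes>\<^bsub>G\<^esub> acc) xs \<one>\<^bsub>G\<^esub>"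

end

theory Submission
  imports Defs
begin

lemma D3_monoid: "monoid D3"
proof (rule monoidI)
  fix x y z assume x: "x \<in> carrier D3" and y: "y \<in> carrier D3" and z: "z \<in> carrier D3"
  show "x \<otimes>\<^bsub>D3\<^esub> y \<in> carrier D3" using x y
    by (auto simp: D3_def split: prod.splits)
  obtain k1 s1 where 1: "x = (k1,s1)" "k1 \<in> {0,1,2}" using x by (cases x) (auto simp: D3_def)
  obtain k2 s2 where 2: "y = (k2,s2)" "k2 \<in> {0,1,2}" using y by (cases y) (auto simp: D3_def)
  obtain k3 s3 where 3: "z = (k3,s3)" "k3 \<in> {0,1,2}" using z by (cases z) (auto simp: D3_def)
  show "x \<otimes>\<^bsub>D3\<^esub> y \<otimes>\<^bsub>D3\<^esub> z = x \<otimes>\<^bsub>D3\<^esub> (y \<otimes>\<^bsub>D3\<^esub> z)"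
    using 1 2 3 by (cases s1; cases s2; cases s3) (auto simp: D3_def)
next
  show "\<one>\<^bsub>D3\<^esub> \<in> carrier D3" by (simp add: D3_def)
next
  fix x assume x: "x \<in> carrier D3"
  then obtain k s where "x = (k,s)" "k \<in> {0,1,2}" by (cases x) (auto simp: D3_def)
  then show "\<one>\<^bsub>D3\<^esub> \<otimes>\<^bsub>D3\<^esub> x = x" "x \<otimes>\<^bsub>D3\<^esub> \<one>\<^bsub>D3\<^esub> = x"
    by (auto simp: D3_def)
qed

interpretation D: monoid D3 by (rule D3_monoid)

lemma list_prod_carrier: "set xs \<subseteq> carrier D3 \<Longrightarrow> list_prod D3 xs \<in> carrier D3"
  by (induction xs) (auto simp: list_prod_def)

lemma list_prod_append: "set xs \<subseteq> carrier D3 \<Longrightarrow> set ys \<subseteq> carrier D3 \<Longrightarrow>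
  list_prod D3 (xs @ ys) = list_prod D3 xs \<otimes>\<^bsub>D3\<^esub> list_prod D3 ys"
proof (induction xs)
  case Nil then show ?case using list_prod_carrier[of ys] by (simp add: list_prod_def)
next
  case (Cons x xs)
  then show ?case using list_prod_carrier[of ys] list_prod_carrier[of xs]
    by (simp add: list_prod_def D.m_assoc)
qed

lemma list_prod_Cons: "list_prod D3 (x # xs) = x \<otimes>\<^bsub>D3\<^esub> list_prod D3 xs"
  by (simp add: list_prod_def)

lemma list_prod_Nil: "list_prod D3 [] = \<one>\<^bsub>D3\<^esub>"
  by (simp add: list_prod_def)

fun sq :: "nat \<Rightarrow> ((int \<times> bool) \<times> nat) list" where
  "sq 0 = [((1,False),0)]"
| "sq (Suc n) = sq n @ sq n @ [((0,True), Suc n)] @ sq n @ [((0,True), Suc n)]"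

lemma sq_len_eq: "length (sq n) + 1 = 2 * 3 ^ n"
  by (induction n) auto

lemma sq_len: "length (sq n) \<le> 3 ^ Suc n"
  using sq_len_eq[of n] by simp

lemma sq_snd: "p \<in> set (sq n) \<Longrightarrow> snd p \<le> n"
  by (induction n) auto

lemma sq_fst: "p \<in> set (sq n) \<Longrightarrow> fst p \<in> carrier D3"
  by (induction n) (auto simp: D3_def)

definition ev :: "(nat \<Rightarrow> nat) \<Rightarrow> ((int \<times> bool) \<times> nat) list \<Rightarrow> (int \<times> bool) list" where
  "ev y xs = map (\<lambda>p. fst p [^]\<^bsub>D3\<^esub> y (snd p)) xs"

lemma ev_carrier: "set (ev y (sq n)) \<subseteq> carrier D3"
  using sq_fst by (auto simp: ev_def)

lemma pow01: "g \<in> carrier D3 \<Longrightarrow> (b::nat) \<in> {0,1} \<Longrightarrow> g [^]\<^bsub>D3\<^esub> b = (if b = 1 then g else \<one>\<^bsub>D3\<^esub>)"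
  by (auto simp: One_nat_def)

lemma sq_val: "(\<forall>j\<le>n. y j \<in> {0,1}) \<Longrightarrow>
  list_prod D3 (ev y (sq n)) = (if \<forall>j\<le>n. y j = 1 then (1,False) else (0,False))"
proof (induction n)
  case 0
  then show ?case using pow01[of "(1,False)" "y 0"]
    by (auto simp: ev_def list_prod_def D3_def)
next
  case (Suc n)
  let ?v = "list_prod D3 (ev y (sq n))"
  have c0: "(0::int,True) \<in> carrier D3" by (simp add: D3_def)
  let ?s = "(0::int,True) [^]\<^bsub>D3\<^esub> y (Suc n)"
  have IH: "?v = (if \<forall>j\<le>n. y j = 1 then (1,False) else (0,False))" using Suc by auto
  have s: "?s = (if y (Suc n) = 1 then (0,True) else (0,False))"
    using pow01[of "(0,True)" "y (Suc n)"] Suc.prems c0 by (auto simp: D3_def)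
  have sc: "set [?s] \<subseteq> carrier D3" using c0 by simp
  have e: "ev y (sq (Suc n)) = ev y (sq n) @ ev y (sq n) @ ?s # ev y (sq n) @ [?s]"
    by (simp add: ev_def)
  have "list_prod D3 (ev y (sq (Suc n))) =
     ?v \<otimes>\<^bsub>D3\<^esub> (?v \<otimes>\<^bsub>D3\<^esub> (?s \<otimes>\<^bsub>D3\<^esub> (?v \<otimes>\<^bsub>D3\<^esub> (?s \<otimes>\<^bsub>D3\<^esub> \<one>\<^bsub>D3\<^esub>))))"
    unfolding e using ev_carrier[of y n] sc
    by (simp add: list_prod_append list_prod_Cons list_prod_Nil del: list_prod_def)
  also have "\<dots> = (if \<forall>j\<le>Suc n. y j = 1 then (1,False) else (0,False))"
    unfolding IH s using Suc.prems
    by (auto simp: list_prod_def D3_def le_Suc_eq)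
  finally show ?case .
qed

theorem mainTheorem11:
  fixes r :: nat
  assumes "r \<ge> 1"
  shows "\<exists>K :: nat. K \<le> 3 ^ r \<and>
           (\<exists>(a :: nat \<Rightarrow> int \<times> bool) (\<pi> :: nat \<Rightarrow> nat).
              (\<forall>i<K. a i \<in> carrier D3) \<and> (\<forall>i<K. \<pi> i < r) \<and>
              (\<forall>y :: nat \<Rightarrow> nat. (\<forall>j<r. y j \<in> {0, 1}) \<longrightarrow>
                 (list_prod D3 (map (\<lambda>i. a i [^]\<^bsub>D3\<^esub> y (\<pi> i)) [0..<K]) \<noteq> \<one>\<^bsub>D3\<^esub>
                  \<longleftrightarrow> (\<forall>j<r. y j = 1))))"
proof -
  obtain n where n: "r = Suc n" using assms by (cases r) auto
  let ?L = "sq n"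
  have A: "length ?L \<le> 3 ^ r" using sq_len n by simp
  have B: "\<forall>i<length ?L. fst (?L ! i) \<in> carrier D3" by (metis sq_fst nth_mem)
  have C: "\<forall>i<length ?L. snd (?L ! i) < r" using n by (metis sq_snd nth_mem le_imp_less_Suc)
  have D: "\<forall>y :: nat \<Rightarrow> nat. (\<forall>j<r. y j \<in> {0, 1}) \<longrightarrow>
                 (list_prod D3 (map (\<lambda>i. fst (?L ! i) [^]\<^bsub>D3\<^esub> y (snd (?L ! i))) [0..<length ?L]) \<noteq> \<one>\<^bsub>D3\<^esub>
                  \<longleftrightarrow> (\<forall>j<r. y j = 1))"
  proof (intro allI impI)
    fix y :: "nat \<Rightarrow> nat" assume y: "\<forall>j<r. y j \<in> {0, 1}"
    have m: "map (\<lambda>i. fst (?L ! i) [^]\<^bsub>D3\<^esub> y (snd (?L ! i))) [0..<length ?L] = ev y ?L"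
      by (rule nth_equalityI) (auto simp: ev_def)
    have y': "\<forall>j\<le>n. y j \<in> {0,1}" using y n by auto
    show "(list_prod D3 (map (\<lambda>i. fst (?L ! i) [^]\<^bsub>D3\<^esub> y (snd (?L ! i))) [0..<length ?L]) \<noteq> \<one>\<^bsub>D3\<^esub>)
       = (\<forall>j<r. y j = 1)"
      unfolding m sq_val[OF y'] using n by (auto simp: D3_def less_Suc_eq_le)
  qed
  show ?thesis
    apply (rule exI[of _ "length ?L"])
    apply (rule conjI[OF A])
    apply (rule exI[of _ "\<lambda>i. fst (?L ! i)"])
    apply (rule exI[of _ "\<lambda>i. snd (?L ! i)"])
    using B C D by blast
qed

end
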